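(* Let $(M,g)$ be a gas giant and let $\varepsilon>0$ be sufficiently small. Fix $y\in\partial M$ and $\eta\in T^*_y\partial M$ with $h^{ij}(0,y)\eta_i\eta_j=1$. For $0<s<\varepsilon$ let $\sigma_s=(s,\eta)\in T^*_{(0,y)}M$, i.e. $\xi=s$. Let $\gamma_s(t)=\phi_t(0,y,\sigma_s)$ for $t\in[0,\tau(0,y,\sigma_s)]$, and let $l(\gamma_s)>0$ be its length. Then $\gamma_s(t)\to(0,y,0,\eta)$ in $T^*M$ as $s\to0$, uniformly in $t\in[0,\tau(0,y,\sigma_s)]$, and $l(\gamma_s)\to0$ as $s\to0$.
   Context: Gas giant setting. $M$ is a compact manifold with boundary, $\dim M=n\ge 2$, and $g=\rho^{-1}\bar g$ with $\bar g$ smooth up to the boundary and $\rho$ a boundary defining function. Near $\partial M$ there are coordinates $(x,y)\in[0,\varepsilon_0)\times\partial M$ in which $g=\mathrm{d}x^2+x^{-2}h(x,y,\mathrm{d}y)$, with $h_x$ a family of metrics on $\partial M$ smooth in $x$ up to $x=0$. Dual coordinates on $T^*M$ are $(\xi,\eta)$. Geodesic flow. $\phi_t$ is the Hamiltonian flow on $T^*M$ of $H=\tfrac12\xi^2+\tfrac12x^2h^{ij}\eta_i\eta_j$: - $\dot x=\xi$, - $\dot y^i=x^2h^{ij}\eta_j$, - $\dot\xi=-xh^{ij}\eta_i\eta_j-\tfrac12x^2\partial_xh^{ij}\eta_i\eta_j$, - $\dot\eta_i=-\tfrac12x^2\partial_{y^i}h^{kj}\eta_k\eta_j$. Exit time and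 length. For an initial point on $\{x=0\}$ with $\xi>0$, $\tau$ denotes the first positive time at which $x$ returns to $0$. The flow from $(0,y,\sigma_s)$ has constant $g$-speed $s$, so its length is $l(\gamma_s)=s\,\tau(0,y,\sigma_s)$. *)

theory Defs
  imports "HOL-Analysis.Analysis"
begin

fun Ck_on :: "nat \<Rightarrow> ('a::euclidean_space \<Rightarrow> real) \<Rightarrow> 'a set \<Rightarrow> bool" where
  "Ck_on 0 f U = continuous_on U f"
| "Ck_on (Suc k) f U =
     ((\<forall>p\<in>U. f differentiable (at p)) \<and>
      (\<forall>b\<in>Basis. Ck_on k (\<lambda>p. frechet_derivative f (at p) b) U))"

definition smooth_on :: "('a::euclidean_space \<Rightarrow> real) \<Rightarrow> 'a set \<Rightarrow> bool" where
  "smooth_on f U \<longleftrightarrow> (\<forall>k. Ck_on k f U)"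

text \<open>Collar coordinates near the boundary: x :: real, y :: real^'m (a chart of the boundary,
  dim 'm = n - 1). hinv x y is the matrix (h^{ij}(x,y)).\<close>

definition hquad :: "(real \<Rightarrow> real^'m \<Rightarrow> real^'m^'m) \<Rightarrow> real \<Rightarrow> real^'m \<Rightarrow> real^'m \<Rightarrow> real" where
  "hquad hinv x y \<eta> = (\<Sum>i\<in>UNIV. \<Sum>j\<in>UNIV. hinv x y $ i $ j * \<eta> $ i * \<eta> $ j)"

definition dx_hinv :: "(real \<Rightarrow> real^'m \<Rightarrow> real^'m^'m) \<Rightarrow> real \<Rightarrow> real^'m \<Rightarrow> 'm \<Rightarrow> 'm \<Rightarrow> real" where
  "dx_hinv hinv x y i j =
     frechet_derivative (\<lambda>(a, b). hinv a b $ i $ j) (at (x, y)) (1, 0)"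

definition dy_hinv :: "(real \<Rightarrow> real^'m \<Rightarrow> real^'m^'m) \<Rightarrow> real \<Rightarrow> real^'m \<Rightarrow> 'm \<Rightarrow> 'm \<Rightarrow> 'm \<Rightarrow> real" where
  "dy_hinv hinv x y k i j =
     frechet_derivative (\<lambda>(a, b). hinv a b $ i $ j) (at (x, y)) (0, axis k 1)"

text \<open>Hamiltonian vector field of H = xi^2/2 + x^2 h^{ij} eta_i eta_j / 2 in coordinates
  (x, y, xi, eta).\<close>
definition ham_field ::
  "(real \<Rightarrow> real^'m \<Rightarrow> real^'m^'m) \<Rightarrow> real \<times> (real^'m) \<times> real \<times> (real^'m)
     \<Rightarrow> real \<times> (real^'m) \<times> real \<times> (real^'m)" where
  "ham_field hinv p = (let x = fst p; y = fst (snd p); \<xi> = fst (snd (snd p));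
       \<eta> = snd (snd (snd p)) in
     (\<xi>,
      ((\<chi> i. x^2 * (\<Sum>j\<in>UNIV. hinv x y $ i $ j * \<eta> $ j)) :: real^'m),
      (- x * hquad hinv x y \<eta>
        - x^2 / 2 * (\<Sum>i\<in>UNIV. \<Sum>j\<in>UNIV. dx_hinv hinv x y i j * \<eta> $ i * \<eta> $ j)),
      ((\<chi> i. - (x^2 / 2 * (\<Sum>k\<in>UNIV. \<Sum>j\<in>UNIV. dy_hinv hinv x y i k j * \<eta> $ k * \<eta> $ j))) :: real^'m)))"

text \<open>gamma on [0,T] is the flow from (0, y0, s, eta0) up to the first positive return
  time T = tau(0,y0,sigma_s) of x to 0, staying in the coordinate domain U.\<close>
definition exit_trajectory ::
  "(real \<Rightarrow> real^'m \<Rightarrow> real^'m^'m) \<Rightarrow> (real \<times> (real^'m)) set \<Rightarrow> real^'m \<Rightarrow> real \<Rightarrow> real^'m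
     \<Rightarrow> (real \<Rightarrow> real \<times> (real^'m) \<times> real \<times> (real^'m)) \<Rightarrow> real \<Rightarrow> bool" where
  "exit_trajectory hinv U y0 s \<eta>0 \<gamma> T \<longleftrightarrow>
     T > 0 \<and> \<gamma> 0 = (0, y0, s, \<eta>0) \<and>
     (\<forall>t\<in>{0..T}. (fst (\<gamma> t), fst (snd (\<gamma> t))) \<in> U \<and>
        (\<gamma> has_vector_derivative ham_field hinv (\<gamma> t)) (at t within {0..T})) \<and>
     (\<forall>t\<in>{0<..<T}. fst (\<gamma> t) > 0) \<and> fst (\<gamma> T) = 0"

end

theory Submission
  imports Defs
begin

lemma integral_pow_has:
  fixes b :: real assumes "0 \<le> b"
  shows "((\<lambda>r. r ^ k) has_integral (b ^ Suc k / Suc k)) {0..b}"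
proof -
  have "((\<lambda>r. r ^ k) has_integral ((\<lambda>r. r ^ Suc k / Suc k) b - (\<lambda>r. r ^ Suc k / Suc k) 0)) {0..b}"
    apply (rule fundamental_theorem_of_calculus[OF assms])
    apply (rule has_real_derivative_iff_has_vector_derivative[THEN iffD1])
    apply (rule derivative_eq_intros refl | simp)+
    done
  then show ?thesis by simp
qed

lemma picard:
  fixes G :: "'a::euclidean_space \<Rightarrow> 'a"
  assumes lip: "\<And>x y. norm (G x - G y) \<le> L * norm (x - y)" and L: "0 \<le> L" and a: "0 \<le> a"
  shows "\<exists>\<gamma>. \<gamma> 0 = p \<and> (\<forall>t\<in>{0..a}. (\<gamma> has_vector_derivative G (\<gamma> t)) (at t within {0..a}))"
proof -
  have contG: "continuous_on UNIV G"
    by (rule lipschitz_on_continuous_on[of L]) (use lip L in \<open>auto simp: lipschitz_on_def dist_norm\<close>)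
  define c where "c t = max 0 (min a t)" for t :: real
  have c_in: "c t \<in> {0..a}" for t using a by (auto simp: c_def)
  have c_id: "t \<in> {0..a} \<Longrightarrow> c t = t" for t by (auto simp: c_def)
  have contc: "continuous_on UNIV c" unfolding c_def by (intro continuous_intros)
  define Pf where "Pf f t = p + integral {0..c t} (\<lambda>r. G (f r))" for f :: "real \<Rightarrow> 'a" and t
  have cont_comp: "continuous_on S (\<lambda>r. G (apply_bcontfun f r))" for f :: "real \<Rightarrow>\<^sub>C 'a" and S
    by (rule continuous_on_compose2[OF contG]) auto
  have int_deriv: "u \<in> {0..a} \<Longrightarrow> ((\<lambda>u. integral {0..u} (\<lambda>r. G (apply_bcontfun f r))) has_vector_derivative G (f u)) (at u within {0..a})" for f :: "real \<Rightarrow>\<^sub>C 'a" and u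
    by (rule integral_has_vector_derivative[OF cont_comp])
  have int_cont: "continuous_on {0..a} (\<lambda>u. integral {0..u} (\<lambda>r. G (apply_bcontfun f r)))" for f :: "real \<Rightarrow>\<^sub>C 'a"
    using int_deriv[of _ f] has_vector_derivative_continuous continuous_on_eq_continuous_within by blast
  have inbc: "Pf (apply_bcontfun f) \<in> bcontfun" for f
  proof -
    have cont: "continuous_on UNIV (Pf (apply_bcontfun f))"
      unfolding Pf_def
      by (intro continuous_intros continuous_on_compose2[OF int_cont[of f] contc]) (use c_in in auto)
    have "range (Pf (apply_bcontfun f)) \<subseteq> (\<lambda>u. p + integral {0..u} (\<lambda>r. G (apply_bcontfun f r))) ` {0..a}"
      unfolding Pf_def using c_in by auto
    moreover have "compact ((\<lambda>u. p + integral {0..u} (\<lambda>r. G (apply_bcontfun f r))) ` {0..a})"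
      by (intro compact_continuous_image continuous_intros int_cont) auto
    ultimately have "bounded (range (Pf (apply_bcontfun f)))"
      using compact_imp_bounded bounded_subset by blast
    with cont show ?thesis by (simp add: bcontfun_def)
  qed
  define P where "P f = Bcontfun (Pf (apply_bcontfun f))" for f
  have Papp: "apply_bcontfun (P f) t = Pf (apply_bcontfun f) t" for f t
    unfolding P_def using inbc Bcontfun_inverse by metis
  have est: "norm (apply_bcontfun ((P^^k) f) t - apply_bcontfun ((P^^k) g) t) \<le> (L * c t)^k / fact k * dist f g" for k f g t
  proof (induction k arbitrary: t)
    case 0
    then show ?case using dist_bounded[of f t g] by (simp add: dist_norm)
  next
    case (Suc k)
    define F1 where "F1 = (P^^k) f"
    define F2 where "F2 = (P^^k) g"
    have b0: "0 \<le> c t" using c_in by auto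
    have i1: "(\<lambda>r. G (apply_bcontfun F1 r)) integrable_on {0..c t}"
      by (rule integrable_continuous_interval[OF cont_comp])
    have i2: "(\<lambda>r. G (apply_bcontfun F2 r)) integrable_on {0..c t}"
      by (rule integrable_continuous_interval[OF cont_comp])
    have hi: "((\<lambda>r. L * ((L * r)^k / fact k * dist f g)) has_integral
        L * (L^k / fact k * dist f g) * (c t ^ Suc k / Suc k)) {0..c t}"
    proof -
      have "((\<lambda>r. (L * (L^k / fact k * dist f g)) * r ^ k) has_integral
        L * (L^k / fact k * dist f g) * (c t ^ Suc k / Suc k)) {0..c t}"
        by (rule has_integral_mult_right[OF integral_pow_has[OF b0]])
      then show ?thesis by (simp add: power_mult_distrib algebra_simps)
    qed
    have "norm (apply_bcontfun ((P^^Suc k) f) t - apply_bcontfun ((P^^Suc k) g) t)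
        = norm (integral {0..c t} (\<lambda>r. G (apply_bcontfun F1 r)) - integral {0..c t} (\<lambda>r. G (apply_bcontfun F2 r)))"
      by (simp add: Papp Pf_def F1_def F2_def)
    also have "\<dots> = norm (integral {0..c t} (\<lambda>r. G (apply_bcontfun F1 r) - G (apply_bcontfun F2 r)))"
      by (simp only: integral_diff[OF i1 i2])
    also have "\<dots> \<le> integral {0..c t} (\<lambda>r. L * ((L * r)^k / fact k * dist f g))"
    proof (rule integral_norm_bound_integral)
      show "(\<lambda>r. G (apply_bcontfun F1 r) - G (apply_bcontfun F2 r)) integrable_on {0..c t}"
        using i1 i2 by (rule integrable_diff)
      show "(\<lambda>r. L * ((L * r) ^ k / fact k * dist f g)) integrable_on {0..c t}"
        using hi by blast
      fix r assume r: "r \<in> {0..c t}"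
      then have "c r = r" using c_in[of t] by (intro c_id) auto
      then have "norm (apply_bcontfun F1 r - apply_bcontfun F2 r) \<le> (L * r)^k / fact k * dist f g"
        using Suc.IH[of r] by (simp add: F1_def F2_def)
      then show "norm (G (apply_bcontfun F1 r) - G (apply_bcontfun F2 r)) \<le> L * ((L * r) ^ k / fact k * dist f g)"
        using lip[of "apply_bcontfun F1 r" "apply_bcontfun F2 r"] L
        by (meson mult_left_mono order_trans)
    qed
    also have "\<dots> = L * (L^k / fact k * dist f g) * (c t ^ Suc k / Suc k)"
      using hi by (rule integral_unique)
    also have "\<dots> = (L * c t) ^ Suc k / fact (Suc k) * dist f g"
      by (simp add: power_mult_distrib field_simps)
    finally show ?case .
  qed
  have "(\<lambda>n. inverse (fact n) * (L * a)^n) \<longlonglongrightarrow> 0"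
    by (rule summable_LIMSEQ_zero[OF summable_exp])
  then obtain k where k: "inverse (fact k) * (L * a)^k < 1/2"
    using order_tendstoD(2)[of _ 0 sequentially "1/2::real"] eventually_sequentially by fastforce
  have contr: "dist ((P^^k) f) ((P^^k) g) \<le> 1/2 * dist f g" for f g
  proof (rule dist_bound)
    fix t
    have "(L * c t)^k / fact k \<le> (L * a)^k / fact k"
      using c_in[of t] L by (intro divide_right_mono power_mono mult_left_mono) auto
    also have "\<dots> \<le> 1/2" using k by (simp add: field_simps)
    finally have "(L * c t)^k / fact k * dist f g \<le> 1/2 * dist f g"
      by (intro mult_right_mono) auto
    then show "dist (apply_bcontfun ((P^^k) f) t) (apply_bcontfun ((P^^k) g) t) \<le> 1/2 * dist f g"
      using est[of k f t g] unfolding dist_norm by linarith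
  qed
  have ex1: "\<exists>!x. (P^^k) x = x"
    by (rule banach_fix_type[of "1/2"]) (use contr in auto)
  then obtain f0 where f0: "(P^^k) f0 = f0" and uniq0: "\<forall>f. (P^^k) f = f \<longrightarrow> f = f0"
    unfolding Ex1_def by blast
  have uniq: "\<And>f. (P^^k) f = f \<Longrightarrow> f = f0" using uniq0 by blast
  have "(P^^k) (P f0) = P f0"
    by (metis f0 funpow_swap1)
  then have Pf0: "P f0 = f0" using uniq by blast
  define \<gamma> where "\<gamma> = apply_bcontfun f0"
  have geq: "\<gamma> t = Pf \<gamma> t" for t
    unfolding \<gamma>_def by (metis Papp Pf0)
  show ?thesis
  proof (intro exI conjI ballI)
    show "\<gamma> 0 = p" using geq[of 0] by (simp add: Pf_def c_def)
    fix t assume t: "t \<in> {0..a}"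
    have "((\<lambda>u. p + integral {0..u} (\<lambda>r. G (apply_bcontfun f0 r))) has_vector_derivative G (\<gamma> t)) (at t within {0..a})"
      unfolding \<gamma>_def using has_vector_derivative_add[OF has_vector_derivative_const int_deriv[OF t, of f0], of p] by simp
    then show "(\<gamma> has_vector_derivative G (\<gamma> t)) (at t within {0..a})"
    proof (rule has_vector_derivative_transform[OF t, rotated])
      fix u assume "u \<in> {0..a}"
      then show "\<gamma> u = p + integral {0..u} (\<lambda>r. G (apply_bcontfun f0 r))"
        using geq[of u] c_id[of u] by (simp add: Pf_def \<gamma>_def)
    qed
  qed
qed

definition LB :: "'a::metric_space set \<Rightarrow> ('a \<Rightarrow> real) \<Rightarrow> bool" where
  "LB C f \<longleftrightarrow> (\<exists>L\<ge>0. \<forall>p\<in>C. \<forall>q\<in>C. \<bar>f p - f q\<bar> \<le> L * dist p q) \<and> (\<exists>B\<ge>0. \<forall>p\<in>C. \<bar>f p\<bar> \<le> B)"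

lemma LBI:
  assumes "0 \<le> L" "0 \<le> B" "\<And>p q. p \<in> C \<Longrightarrow> q \<in> C \<Longrightarrow> \<bar>f p - f q\<bar> \<le> L * dist p q"
    "\<And>p. p \<in> C \<Longrightarrow> \<bar>f p\<bar> \<le> B"
  shows "LB C f"
  unfolding LB_def using assms by blast

lemma LB_const[intro]: "LB C (\<lambda>p. c)"
  unfolding LB_def by (auto intro!: exI[of _ "\<bar>c\<bar>"])

lemma LB_add[intro]: assumes "LB C f" "LB C g" shows "LB C (\<lambda>p. f p + g p)"
proof -
  obtain Lf Bf where f: "Lf \<ge> 0" "\<forall>p\<in>C. \<forall>q\<in>C. \<bar>f p - f q\<bar> \<le> Lf * dist p q" "Bf \<ge> 0" "\<forall>p\<in>C. \<bar>f p\<bar> \<le> Bf"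
    using assms(1) unfolding LB_def by blast
  obtain Lg Bg where g: "Lg \<ge> 0" "\<forall>p\<in>C. \<forall>q\<in>C. \<bar>g p - g q\<bar> \<le> Lg * dist p q" "Bg \<ge> 0" "\<forall>p\<in>C. \<bar>g p\<bar> \<le> Bg"
    using assms(2) unfolding LB_def by blast
  have "\<bar>f p + g p - (f q + g q)\<bar> \<le> (Lf + Lg) * dist p q" if "p \<in> C" "q \<in> C" for p q
  proof -
    have "\<bar>f p - f q\<bar> \<le> Lf * dist p q" "\<bar>g p - g q\<bar> \<le> Lg * dist p q" using f g that by auto
    then show ?thesis by (simp add: algebra_simps abs_le_iff)
  qed
  moreover have "\<bar>f p + g p\<bar> \<le> Bf + Bg" if "p \<in> C" for p
    using f(4) g(4) that by (meson abs_triangle_ineq add_mono order_trans)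
  ultimately show ?thesis using f g by (intro LBI[of "Lf + Lg" "Bf + Bg"]) auto
qed

lemma LB_minus[intro]: assumes "LB C f" shows "LB C (\<lambda>p. - f p)"
proof -
  obtain L B where f: "L \<ge> 0" "\<forall>p\<in>C. \<forall>q\<in>C. \<bar>f p - f q\<bar> \<le> L * dist p q" "B \<ge> 0" "\<forall>p\<in>C. \<bar>f p\<bar> \<le> B"
    using assms unfolding LB_def by blast
  have e: "\<bar>- f p - - f q\<bar> = \<bar>f p - f q\<bar>" for p q by (simp add: abs_minus_commute)
  show ?thesis by (rule LBI[of L B]) (use f e in auto)
qed

lemma LB_mult[intro]: assumes "LB C f" "LB C g" shows "LB C (\<lambda>p. f p * g p)"
proof -
  obtain Lf Bf where f: "Lf \<ge> 0" "\<forall>p\<in>C. \<forall>q\<in>C. \<bar>f p - f q\<bar> \<le> Lf * dist p q" "Bf \<ge> 0" "\<forall>p\<in>C. \<bar>f p\<bar> \<le> Bf"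
    using assms(1) unfolding LB_def by blast
  obtain Lg Bg where g: "Lg \<ge> 0" "\<forall>p\<in>C. \<forall>q\<in>C. \<bar>g p - g q\<bar> \<le> Lg * dist p q" "Bg \<ge> 0" "\<forall>p\<in>C. \<bar>g p\<bar> \<le> Bg"
    using assms(2) unfolding LB_def by blast
  have l: "\<bar>f p * g p - f q * g q\<bar> \<le> (Bf * Lg + Bg * Lf) * dist p q" if pq: "p \<in> C" "q \<in> C" for p q
  proof -
    have e: "f p * g p - f q * g q = f p * (g p - g q) + g q * (f p - f q)" by algebra
    have h1: "\<bar>f p\<bar> \<le> Bf" "\<bar>g p - g q\<bar> \<le> Lg * dist p q" "\<bar>g q\<bar> \<le> Bg" "\<bar>f p - f q\<bar> \<le> Lf * dist p q"
      using pq f(2,4) g(2,4) by auto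
    have "\<bar>f p * (g p - g q)\<bar> \<le> Bf * (Lg * dist p q)"
      unfolding abs_mult by (rule mult_mono[OF h1(1) h1(2) f(3) abs_ge_zero])
    moreover have "\<bar>g q * (f p - f q)\<bar> \<le> Bg * (Lf * dist p q)"
      unfolding abs_mult by (rule mult_mono[OF h1(3) h1(4) g(3) abs_ge_zero])
    ultimately have "\<bar>f p * (g p - g q)\<bar> + \<bar>g q * (f p - f q)\<bar> \<le> Bf * (Lg * dist p q) + Bg * (Lf * dist p q)"
      by (rule add_mono)
    also have "\<dots> = (Bf * Lg + Bg * Lf) * dist p q" by (simp add: algebra_simps)
    finally have "\<bar>f p * (g p - g q)\<bar> + \<bar>g q * (f p - f q)\<bar> \<le> (Bf * Lg + Bg * Lf) * dist p q" .
    moreover have "\<bar>f p * (g p - g q) + g q * (f p - f q)\<bar> \<le> \<bar>f p * (g p - g q)\<bar> + \<bar>g q * (f p - f q)\<bar>"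
      by (rule abs_triangle_ineq)
    ultimately show ?thesis unfolding e by linarith
  qed
  have b: "\<bar>f p * g p\<bar> \<le> Bf * Bg" if "p \<in> C" for p
    unfolding abs_mult using f(4) g(4) that by (intro mult_mono[OF _ _ f(3) abs_ge_zero]) auto
  show ?thesis
  proof (rule LBI[of "Bf * Lg + Bg * Lf" "Bf * Bg"])
    show "0 \<le> Bf * Lg + Bg * Lf" using f g by simp
    show "0 \<le> Bf * Bg" using f g by simp
  next
    fix p q assume "p \<in> C" "q \<in> C"
    then show "\<bar>f p * g p - f q * g q\<bar> \<le> (Bf * Lg + Bg * Lf) * dist p q" by (rule l)
  next
    fix p assume "p \<in> C" then show "\<bar>f p * g p\<bar> \<le> Bf * Bg" by (rule b)
  qed
qed

lemma LB_diff[intro]: assumes "LB C f" "LB C g" shows "LB C (\<lambda>p. f p - g p)"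
  using LB_add[OF assms(1) LB_minus[OF assms(2)]] by simp

lemma LB_power[intro]: assumes "LB C f" shows "LB C (\<lambda>p. f p ^ n)"
  by (induction n) (use assms in auto)

lemma LB_divide[intro]: assumes "LB C f" shows "LB C (\<lambda>p. f p / c)"
  using LB_mult[OF assms LB_const[of C "inverse c"]] by (simp add: divide_inverse)

lemma LB_sum[intro]: assumes "\<And>i. i \<in> I \<Longrightarrow> LB C (f i)" shows "LB C (\<lambda>p. \<Sum>i\<in>I. f i p)"
proof (cases "finite I")
  case True
  then show ?thesis using assms by (induction I rule: finite_induct) auto
qed auto

lemma LB_subset: "LB C f \<Longrightarrow> D \<subseteq> C \<Longrightarrow> LB D f"
  unfolding LB_def by (meson subsetD)

lemma LB_comp:
  assumes "LB D g" "\<And>p. p \<in> C \<Longrightarrow> \<pi> p \<in> D" "\<And>p q. p \<in> C \<Longrightarrow> q \<in> C \<Longrightarrow> dist (\<pi> p) (\<pi> q) \<le> dist p q"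
  shows "LB C (\<lambda>p. g (\<pi> p))"
proof -
  obtain L B where g: "L \<ge> 0" "\<forall>p\<in>D. \<forall>q\<in>D. \<bar>g p - g q\<bar> \<le> L * dist p q" "B \<ge> 0" "\<forall>p\<in>D. \<bar>g p\<bar> \<le> B"
    using assms(1) unfolding LB_def by blast
  have "\<bar>g (\<pi> p) - g (\<pi> q)\<bar> \<le> L * dist p q" if "p \<in> C" "q \<in> C" for p q
    using g(1,2) assms(2,3) that by (meson mult_left_mono order_trans)
  moreover have "\<bar>g (\<pi> p)\<bar> \<le> B" if "p \<in> C" for p using g assms(2) that by auto
  ultimately show ?thesis using g by (intro LBI[of L B]) auto
qed

lemma LB_C1:
  fixes f :: "'a::euclidean_space \<Rightarrow> real"
  assumes Ck: "Ck_on (Suc 0) f U" and KU: "K \<subseteq> U" and cK: "compact K" and vK: "convex K"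
  shows "LB K f"
proof -
  have dif: "\<And>p. p \<in> U \<Longrightarrow> f differentiable (at p)"
    and pc: "\<And>b. b \<in> Basis \<Longrightarrow> continuous_on U (\<lambda>p. frechet_derivative f (at p) b)"
    using Ck by auto
  have "\<forall>b\<in>Basis. \<exists>B. \<forall>p\<in>K. \<bar>frechet_derivative f (at p) b\<bar> \<le> B"
  proof
    fix b :: 'a assume b: "b \<in> Basis"
    have cpt: "compact ((\<lambda>p. frechet_derivative f (at p) b) ` K)"
      by (rule compact_continuous_image[OF continuous_on_subset[OF pc[OF b] KU] cK])
    then obtain B where "\<forall>z\<in>(\<lambda>p. frechet_derivative f (at p) b) ` K. norm z \<le> B"
      using compact_imp_bounded[OF cpt] unfolding bounded_iff by blast
    then show "\<exists>B. \<forall>p\<in>K. \<bar>frechet_derivative f (at p) b\<bar> \<le> B" by auto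
  qed
  from bchoice[OF this] obtain Bb where Bb0: "\<forall>b\<in>Basis. \<forall>p\<in>K. \<bar>frechet_derivative f (at p) b\<bar> \<le> Bb b"
    by blast
  have Bb: "\<And>b p. b \<in> Basis \<Longrightarrow> p \<in> K \<Longrightarrow> \<bar>frechet_derivative f (at p) b\<bar> \<le> Bb b"
    using Bb0 by blast
  define Bt where "Bt = (\<Sum>b\<in>Basis. \<bar>Bb b\<bar>)"
  have Bt0: "Bt \<ge> 0" unfolding Bt_def by (simp add: sum_nonneg)
  have hd: "(f has_derivative frechet_derivative f (at p)) (at p)" if "p \<in> K" for p
    using dif that KU frechet_derivative_works by blast
  have on: "onorm (frechet_derivative f (at p)) \<le> Bt" if p: "p \<in> K" for p
  proof (rule onorm_le)
    fix v :: 'a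
    define D where "D = frechet_derivative f (at p)"
    have lin: "linear D" using hd[OF p] unfolding D_def
      using has_derivative_linear by blast
    have "D v = D (\<Sum>b\<in>Basis. inner v b *\<^sub>R b)" by (simp add: euclidean_representation)
    also have "\<dots> = (\<Sum>b\<in>Basis. inner v b * D b)"
      using lin by (simp add: linear_sum linear_scale)
    finally have eqD: "D v = (\<Sum>b\<in>Basis. inner v b * D b)" .
    have "\<bar>D v\<bar> \<le> (\<Sum>b\<in>Basis. \<bar>inner v b * D b\<bar>)"
      unfolding eqD by (rule sum_abs)
    also have "\<dots> \<le> (\<Sum>b\<in>Basis. norm v * \<bar>Bb b\<bar>)"
    proof (rule sum_mono)
      fix b :: 'a assume b: "b \<in> Basis"
      show "\<bar>inner v b * D b\<bar> \<le> norm v * \<bar>Bb b\<bar>"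
        unfolding abs_mult
        by (rule mult_mono) (use Basis_le_norm[OF b, of v] Bb[OF b p] in \<open>auto simp: D_def\<close>)
    qed
    also have "\<dots> = Bt * norm v" unfolding Bt_def by (simp add: sum_distrib_left mult.commute)
    finally show "norm (frechet_derivative f (at p) v) \<le> Bt * norm v" unfolding D_def by simp
  qed
  have lip: "\<bar>f p - f q\<bar> \<le> Bt * dist p q" if "p \<in> K" "q \<in> K" for p q
    using differentiable_bound[OF vK has_derivative_at_withinI[OF hd] on that]
    by (simp add: dist_norm)
  have "continuous_on K f"
    by (rule differentiable_imp_continuous_on, rule differentiable_at_imp_differentiable_on) (use dif KU in blast)
  then have cfK: "compact (f ` K)" using cK compact_continuous_image by blast
  obtain B where B: "\<forall>z\<in>f ` K. norm z \<le> B" using compact_imp_bounded[OF cfK] unfolding bounded_iff by blast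
  have "\<bar>f p\<bar> \<le> \<bar>B\<bar>" if "p \<in> K" for p using B that by fastforce
  then show ?thesis using Bt0 lip by (intro LBI[of Bt "\<bar>B\<bar>"]) auto
qed

type_synonym 'm st = "real \<times> (real^'m) \<times> real \<times> (real^'m)"

lemma comp_derivs:
  fixes \<gamma> :: "real \<Rightarrow> 'm::finite st"
  assumes "(\<gamma> has_vector_derivative v) (at t within S)"
  shows "((\<lambda>t. fst (\<gamma> t)) has_real_derivative fst v) (at t within S)"
    "((\<lambda>t. fst (snd (\<gamma> t))) has_vector_derivative fst (snd v)) (at t within S)"
    "((\<lambda>t. fst (snd (snd (\<gamma> t)))) has_real_derivative fst (snd (snd v))) (at t within S)"
    "((\<lambda>t. snd (snd (snd (\<gamma> t)))) has_vector_derivative snd (snd (snd v))) (at t within S)"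
proof -
  have l1: "bounded_linear (\<lambda>p::'m st. fst p)" by (rule bounded_linear_fst)
  have l2: "bounded_linear (\<lambda>p::'m st. fst (snd p))"
    using bounded_linear_compose[OF bounded_linear_fst bounded_linear_snd] by (simp add: o_def)
  have l3: "bounded_linear (\<lambda>p::'m st. fst (snd (snd p)))"
    using bounded_linear_compose[OF bounded_linear_fst bounded_linear_compose[OF bounded_linear_snd bounded_linear_snd]] by (simp add: o_def)
  have l4: "bounded_linear (\<lambda>p::'m st. snd (snd (snd p)))"
    using bounded_linear_compose[OF bounded_linear_snd bounded_linear_compose[OF bounded_linear_snd bounded_linear_snd]] by (simp add: o_def)
  show "((\<lambda>t. fst (\<gamma> t)) has_real_derivative fst v) (at t within S)"
    using bounded_linear.has_vector_derivative[OF l1 assms] has_real_derivative_iff_has_vector_derivative by blast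
  show "((\<lambda>t. fst (snd (\<gamma> t))) has_vector_derivative fst (snd v)) (at t within S)"
    using bounded_linear.has_vector_derivative[OF l2 assms] by simp
  show "((\<lambda>t. fst (snd (snd (\<gamma> t)))) has_real_derivative fst (snd (snd v))) (at t within S)"
    using bounded_linear.has_vector_derivative[OF l3 assms] has_real_derivative_iff_has_vector_derivative by blast
  show "((\<lambda>t. snd (snd (snd (\<gamma> t)))) has_vector_derivative snd (snd (snd v))) (at t within S)"
    using bounded_linear.has_vector_derivative[OF l4 assms] by simp
qed

lemma decr_within:
  fixes f :: "real \<Rightarrow> real"
  assumes d: "\<And>u. u \<in> {0..a} \<Longrightarrow> (f has_real_derivative f' u) (at u within {0..a})"
    and n: "\<And>u. u \<in> {0..a} \<Longrightarrow> f' u \<le> 0" and t: "0 \<le> t" "t \<le> a"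
  shows "f t \<le> f 0"
proof -
  have "continuous_on {0..a} f"
    using d DERIV_continuous continuous_on_eq_continuous_within by blast
  then have c: "continuous_on {0..t} f" by (rule continuous_on_subset) (use t in auto)
  show ?thesis
  proof (rule DERIV_nonpos_imp_decreasing_open[OF t(1) _ c])
    fix u assume u: "0 < u" "u < t"
    then have "at u within {0..a} = at u" using t by (intro at_within_Icc_at) auto
    then show "\<exists>y. DERIV f u :> y \<and> y \<le> 0" using d[of u] n[of u] u t by auto
  qed
qed

lemma incr_within:
  fixes f :: "real \<Rightarrow> real"
  assumes d: "\<And>u. u \<in> {0..a} \<Longrightarrow> (f has_real_derivative f' u) (at u within {0..a})"
    and n: "\<And>u. u \<in> {0..a} \<Longrightarrow> f' u \<ge> 0" and t: "0 \<le> t" "t \<le> a"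
  shows "f 0 \<le> f t"
proof -
  have "(\<lambda>u. - f u) t \<le> (\<lambda>u. - f u) 0"
    by (rule decr_within[of a _ "\<lambda>u. - f' u"]) (use d n t in \<open>auto intro!: derivative_eq_intros\<close>)
  then show ?thesis by simp
qed

lemma vec_bound:
  fixes f :: "real \<Rightarrow> 'b::real_normed_vector"
  assumes d: "\<And>u. u \<in> {0..a} \<Longrightarrow> (f has_vector_derivative f' u) (at u within {0..a})"
    and n: "\<And>u. u \<in> {0..a} \<Longrightarrow> norm (f' u) \<le> B" and t: "0 \<le> t" "t \<le> a"
  shows "norm (f t - f 0) \<le> B * t"
proof -
  have "norm (f t - f 0) \<le> B * norm (t - 0)"
  proof (rule differentiable_bound[of "{0..t}" f "\<lambda>u h. h *\<^sub>R f' u"])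
    show "convex {0..t}" by simp
    fix u assume u: "u \<in> {0..t}"
    have "(f has_vector_derivative f' u) (at u within {0..t})"
      by (rule has_vector_derivative_within_subset[OF d]) (use t u in auto)
    then show "(f has_derivative (\<lambda>h. h *\<^sub>R f' u)) (at u within {0..t})"
      by (simp add: has_vector_derivative_def)
    show "onorm (\<lambda>h. h *\<^sub>R f' u) \<le> B"
    proof (rule onorm_le)
      fix h :: real
      have "norm (h *\<^sub>R f' u) = \<bar>h\<bar> * norm (f' u)" by simp
      also have "\<dots> \<le> \<bar>h\<bar> * B" using n[of u] u t by (intro mult_left_mono) auto
      finally show "norm (h *\<^sub>R f' u) \<le> B * norm h" by (simp add: mult.commute)
    qed
  qed (use t in auto)
  then show ?thesis using t by simp
qed

lemma norm4: "norm (a, b, c, d) \<le> norm a + norm b + norm c + norm d"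
proof -
  have "norm (c, d) \<le> norm c + norm d" by (rule norm_Pair_le)
  moreover have "norm (b, c, d) \<le> norm b + norm (c, d)" by (rule norm_Pair_le)
  moreover have "norm (a, b, c, d) \<le> norm a + norm (b, c, d)" by (rule norm_Pair_le)
  ultimately show ?thesis by linarith
qed

lemma two_xy_le: "\<bar>2 * x * y\<bar> \<le> x^2 + (y::real)^2"
proof -
  have "0 \<le> (x - y)^2" "0 \<le> (x + y)^2" by simp_all
  then show ?thesis by (simp add: abs_le_iff power2_eq_square algebra_simps)
qed

lemma sol_restrict:
  assumes "\<forall>t\<in>{0..a}. (\<gamma> has_vector_derivative \<Phi> (\<gamma> t)) (at t within {0..a})" "b \<le> a"
  shows "\<forall>t\<in>{0..b}. (\<gamma> has_vector_derivative \<Phi> (\<gamma> t)) (at t within {0..b})"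
proof
  fix t assume t: "t \<in> {0..b}"
  then have "t \<in> {0..a}" using assms(2) by auto
  then show "(\<gamma> has_vector_derivative \<Phi> (\<gamma> t)) (at t within {0..b})"
    by (rule has_vector_derivative_within_subset[OF bspec[OF assms(1)]]) (use assms(2) in auto)
qed

lemma sol_cont:
  assumes "\<forall>t\<in>{0..a}. (\<gamma> has_vector_derivative \<Phi> (\<gamma> t)) (at t within {0..a})"
  shows "continuous_on {0..a} \<gamma>"
  using assms has_vector_derivative_continuous continuous_on_eq_continuous_within by blast

locale sys =
  fixes F :: "'m::finite st \<Rightarrow> 'm st" and A Bv :: "'m st \<Rightarrow> real^'m" and Q :: "'m st \<Rightarrow> real"
    and C \<rho> :: real and y0 \<eta>0 :: "real^'m" and N :: "'m st set"
  assumes F1: "\<And>p. fst (F p) = fst (snd (snd p))"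
    and F2: "\<And>p. fst (snd (F p)) = (fst p)^2 *\<^sub>R A p"
    and F3: "\<And>p. fst (snd (snd (F p))) = - fst p * Q p"
    and F4: "\<And>p. snd (snd (snd (F p))) = (fst p)^2 *\<^sub>R Bv p"
    and N_def: "N = cball (0, y0, 0, \<eta>0) \<rho>"
    and bA: "\<And>p. p \<in> N \<Longrightarrow> norm (A p) \<le> C"
    and bB: "\<And>p. p \<in> N \<Longrightarrow> norm (Bv p) \<le> C"
    and bQ1: "\<And>p. p \<in> N \<Longrightarrow> 1/4 \<le> Q p"
    and bQ2: "\<And>p. p \<in> N \<Longrightarrow> Q p \<le> C"
    and \<rho>pos: "0 < \<rho>"
begin

definition "E7 = exp ((1 + C) * 8)"
definition "K7 = 2 * E7 * (1 + 8 * C)"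

lemma C_ge: "1/4 \<le> C"
proof -
  have "(0, y0, 0, \<eta>0) \<in> N" using N_def \<rho>pos by simp
  then show ?thesis using bQ1 bQ2 by fastforce
qed

lemma E7_ge: "1 \<le> E7" unfolding E7_def using C_ge by simp

lemma K7_ge: "2 \<le> K7"
proof -
  have "2 * 1 * 1 \<le> 2 * E7 * (1 + 8 * C)"
    using E7_ge C_ge by (intro mult_mono) auto
  then show ?thesis unfolding K7_def by simp
qed

lemma sol_derivs:
  fixes \<gamma> :: "real \<Rightarrow> 'm st"
  assumes sol: "\<forall>t\<in>{0..a}. (\<gamma> has_vector_derivative \<Phi> (\<gamma> t)) (at t within {0..a})"
    and \<Phi>F: "\<And>p. p \<in> N \<Longrightarrow> \<Phi> p = F p" and inN: "\<And>t. t \<in> {0..a} \<Longrightarrow> \<gamma> t \<in> N"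
    and t: "t \<in> {0..a}"
  shows "((\<lambda>t. fst (\<gamma> t)) has_real_derivative fst (snd (snd (\<gamma> t)))) (at t within {0..a})"
    "((\<lambda>t. fst (snd (\<gamma> t))) has_vector_derivative (fst (\<gamma> t))^2 *\<^sub>R A (\<gamma> t)) (at t within {0..a})"
    "((\<lambda>t. fst (snd (snd (\<gamma> t)))) has_real_derivative - fst (\<gamma> t) * Q (\<gamma> t)) (at t within {0..a})"
    "((\<lambda>t. snd (snd (snd (\<gamma> t)))) has_vector_derivative (fst (\<gamma> t))^2 *\<^sub>R Bv (\<gamma> t)) (at t within {0..a})"
proof -
  have d: "(\<gamma> has_vector_derivative F (\<gamma> t)) (at t within {0..a})"
    using bspec[OF sol t] \<Phi>F[OF inN[OF t]] by simp
  show "((\<lambda>t. fst (\<gamma> t)) has_real_derivative fst (snd (snd (\<gamma> t)))) (at t within {0..a})"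
    using comp_derivs(1)[OF d] F1 by simp
  show "((\<lambda>t. fst (snd (\<gamma> t))) has_vector_derivative (fst (\<gamma> t))^2 *\<^sub>R A (\<gamma> t)) (at t within {0..a})"
    using comp_derivs(2)[OF d] F2 by simp
  show "((\<lambda>t. fst (snd (snd (\<gamma> t)))) has_real_derivative - fst (\<gamma> t) * Q (\<gamma> t)) (at t within {0..a})"
    using comp_derivs(3)[OF d] F3 by simp
  show "((\<lambda>t. snd (snd (snd (\<gamma> t)))) has_vector_derivative (fst (\<gamma> t))^2 *\<^sub>R Bv (\<gamma> t)) (at t within {0..a})"
    using comp_derivs(4)[OF d] F4 by simp
qed

lemma apriori:
  fixes \<gamma> :: "real \<Rightarrow> 'm st"
  assumes sol: "\<forall>t\<in>{0..a}. (\<gamma> has_vector_derivative \<Phi> (\<gamma> t)) (at t within {0..a})"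
    and \<Phi>F: "\<And>p. p \<in> N \<Longrightarrow> \<Phi> p = F p" and inN: "\<And>t. t \<in> {0..a} \<Longrightarrow> \<gamma> t \<in> N"
    and g0: "\<gamma> 0 = (0, y0, s, \<eta>0)" and s: "0 \<le> s" "s \<le> 1" and a: "0 \<le> a" "a \<le> 8"
    and t: "t \<in> {0..a}"
  shows "\<bar>fst (\<gamma> t)\<bar> \<le> s * E7" "dist (\<gamma> t) (0, y0, 0, \<eta>0) \<le> s * K7"
proof -
  define X where "X u = fst (\<gamma> u)" for u
  define Y where "Y u = fst (snd (\<gamma> u))" for u
  define \<Xi> where "\<Xi> u = fst (snd (snd (\<gamma> u)))" for u
  define H where "H u = snd (snd (snd (\<gamma> u)))" for u
  have d1: "(X has_real_derivative \<Xi> u) (at u within {0..a})" if "u \<in> {0..a}" for u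
    using sol_derivs(1)[OF sol _ _ that, OF \<Phi>F inN] unfolding X_def \<Xi>_def by simp
  have d2: "(Y has_vector_derivative (X u)^2 *\<^sub>R A (\<gamma> u)) (at u within {0..a})" if "u \<in> {0..a}" for u
    using sol_derivs(2)[OF sol _ _ that, OF \<Phi>F inN] unfolding X_def Y_def by simp
  have d3: "(\<Xi> has_real_derivative - X u * Q (\<gamma> u)) (at u within {0..a})" if "u \<in> {0..a}" for u
    using sol_derivs(3)[OF sol _ _ that, OF \<Phi>F inN] unfolding X_def \<Xi>_def by simp
  have d4: "(H has_vector_derivative (X u)^2 *\<^sub>R Bv (\<gamma> u)) (at u within {0..a})" if "u \<in> {0..a}" for u
    using sol_derivs(4)[OF sol _ _ that, OF \<Phi>F inN] unfolding X_def H_def by simp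
  define c where "c = 1 + C"
  have c0: "0 \<le> c" using C_ge unfolding c_def by simp
  define En where "En u = exp (- (c * u)) * (X u ^ 2 + \<Xi> u ^ 2)" for u
  have dE: "(En has_real_derivative exp (- (c * u)) * (- c * (X u ^ 2 + \<Xi> u ^ 2) + 2 * X u * \<Xi> u * (1 - Q (\<gamma> u)))) (at u within {0..a})"
    if u: "u \<in> {0..a}" for u
    unfolding En_def
    by (rule derivative_eq_intros d1[OF u] d3[OF u] refl | simp add: algebra_simps)+
  have nE: "exp (- (c * u)) * (- c * (X u ^ 2 + \<Xi> u ^ 2) + 2 * X u * \<Xi> u * (1 - Q (\<gamma> u))) \<le> 0"
    if u: "u \<in> {0..a}" for u
  proof -
    have q: "\<bar>1 - Q (\<gamma> u)\<bar> \<le> c" using bQ1[OF inN[OF u]] bQ2[OF inN[OF u]] C_ge unfolding c_def by auto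
    have "2 * X u * \<Xi> u * (1 - Q (\<gamma> u)) \<le> \<bar>2 * X u * \<Xi> u\<bar> * \<bar>1 - Q (\<gamma> u)\<bar>"
      by (metis abs_ge_self abs_mult)
    also have "\<dots> \<le> (X u ^ 2 + \<Xi> u ^ 2) * c"
      by (rule mult_mono[OF two_xy_le q]) auto
    finally have "- c * (X u ^ 2 + \<Xi> u ^ 2) + 2 * X u * \<Xi> u * (1 - Q (\<gamma> u)) \<le> 0"
      by (simp add: algebra_simps)
    then show ?thesis by (simp add: mult_nonneg_nonpos)
  qed
  have E0: "En 0 = s^2" unfolding En_def X_def \<Xi>_def using g0 by simp
  have energy: "X u ^ 2 + \<Xi> u ^ 2 \<le> s^2 * E7" if u: "u \<in> {0..a}" for u
  proof -
    have "En u \<le> En 0"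
      by (rule decr_within[OF dE nE]) (use u in auto)
    then have "exp (- (c * u)) * (X u ^ 2 + \<Xi> u ^ 2) \<le> s^2" using E0 unfolding En_def by simp
    then have le: "exp (c * u) * (exp (- (c * u)) * (X u ^ 2 + \<Xi> u ^ 2)) \<le> exp (c * u) * s^2"
      by (intro mult_left_mono) auto
    have eq2: "exp (c * u) * (exp (- (c * u)) * (X u ^ 2 + \<Xi> u ^ 2)) = X u ^ 2 + \<Xi> u ^ 2"
      by (simp add: mult.assoc[symmetric] exp_add[symmetric])
    have "X u ^ 2 + \<Xi> u ^ 2 \<le> exp (c * u) * s^2" using le eq2 by linarith
    also have "\<dots> \<le> E7 * s^2"
      unfolding E7_def c_def[symmetric] using u a c0 by (intro mult_right_mono) (auto intro: mult_left_mono)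
    finally show ?thesis by (simp add: mult.commute)
  qed
  have absb: "\<bar>z\<bar> \<le> s * E7" if "z^2 \<le> s^2 * E7" for z
  proof -
    have "s^2 * E7 \<le> s^2 * E7^2" using E7_ge by (intro mult_left_mono) (auto simp: power2_eq_square)
    then have "z^2 \<le> (s * E7)^2" using that by (simp add: power_mult_distrib)
    then show ?thesis using abs_le_square_iff[of z "s * E7"] s E7_ge by simp
  qed
  have bX: "\<bar>X u\<bar> \<le> s * E7" if "u \<in> {0..a}" for u
    using energy[OF that] by (intro absb) (smt (verit) zero_le_power2)
  have bXi: "\<bar>\<Xi> u\<bar> \<le> s * E7" if "u \<in> {0..a}" for u
    using energy[OF that] by (intro absb) (smt (verit) zero_le_power2)
  have bX2: "X u ^ 2 \<le> s^2 * E7" if "u \<in> {0..a}" for u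
    using energy[OF that] by (smt (verit) zero_le_power2)
  have nY: "norm (Y t - Y 0) \<le> (s^2 * E7 * C) * t"
  proof (rule vec_bound[OF d2])
    fix u assume u: "u \<in> {0..a}"
    show "norm ((X u)^2 *\<^sub>R A (\<gamma> u)) \<le> s^2 * E7 * C"
      using bX2[OF u] bA[OF inN[OF u]] by (simp, rule mult_mono) (use E7_ge in auto)
  qed (use t in auto)
  have nH: "norm (H t - H 0) \<le> (s^2 * E7 * C) * t"
  proof (rule vec_bound[OF d4])
    fix u assume u: "u \<in> {0..a}"
    show "norm ((X u)^2 *\<^sub>R Bv (\<gamma> u)) \<le> s^2 * E7 * C"
      using bX2[OF u] bB[OF inN[OF u]] by (simp, rule mult_mono) (use E7_ge in auto)
  qed (use t in auto)
  have C0: "0 \<le> C" using C_ge by simp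
  have "s^2 * E7 * C * t \<le> s * E7 * C * 8"
  proof -
    have "s^2 \<le> s" using s by (simp add: power2_eq_square mult_left_le_one_le)
    then show ?thesis using t a C0 E7_ge s
      by (intro mult_mono) auto
  qed
  then have nY': "norm (Y t - y0) \<le> s * E7 * C * 8" and nH': "norm (H t - \<eta>0) \<le> s * E7 * C * 8"
    using nY nH g0 unfolding Y_def H_def by auto
  have eq: "\<gamma> t - (0, y0, 0, \<eta>0) = (X t, Y t - y0, \<Xi> t, H t - \<eta>0)"
    unfolding X_def Y_def \<Xi>_def H_def by (simp add: prod_eq_iff)
  have "dist (\<gamma> t) (0, y0, 0, \<eta>0) \<le> norm (X t) + norm (Y t - y0) + norm (\<Xi> t) + norm (H t - \<eta>0)"
    unfolding dist_norm eq by (rule norm4)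
  also have "\<dots> \<le> s * E7 + s * E7 * C * 8 + s * E7 + s * E7 * C * 8"
    using bX[OF t] bXi[OF t] nY' nH' unfolding real_norm_def by linarith
  also have "\<dots> = s * K7" unfolding K7_def by (simp add: algebra_simps)
  finally show "dist (\<gamma> t) (0, y0, 0, \<eta>0) \<le> s * K7" .
  show "\<bar>fst (\<gamma> t)\<bar> \<le> s * E7" using bX[OF t] unfolding X_def .
qed

lemma bootstrap:
  fixes \<gamma> :: "real \<Rightarrow> 'm st"
  assumes sol: "\<forall>t\<in>{0..a}. (\<gamma> has_vector_derivative \<Phi> (\<gamma> t)) (at t within {0..a})"
    and \<Phi>F: "\<And>p. p \<in> N \<Longrightarrow> \<Phi> p = F p"
    and g0: "\<gamma> 0 = (0, y0, s, \<eta>0)" and s: "0 \<le> s" "s \<le> 1" "s * K7 < \<rho>" and a: "0 \<le> a" "a \<le> 8"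
  shows "\<forall>t\<in>{0..a}. \<gamma> t \<in> N"
proof (rule ccontr)
  assume nt: "\<not> (\<forall>t\<in>{0..a}. \<gamma> t \<in> N)"
  define p0 where "p0 = ((0::real), y0, (0::real), \<eta>0)"
  have memN: "q \<in> N \<longleftrightarrow> dist q p0 \<le> \<rho>" for q unfolding N_def p0_def by (simp add: dist_commute)
  have sK: "s \<le> s * K7" using K7_ge s by (simp add: mult_le_cancel_left1)
  have d0: "dist (\<gamma> 0) p0 = s" unfolding g0 p0_def using s by (simp add: dist_Pair_Pair)
  define S' where "S' = {t\<in>{0..a}. \<rho> \<le> dist (\<gamma> t) p0}"
  have ne: "S' \<noteq> {}" using nt unfolding S'_def memN by force
  have cd: "continuous_on {0..a} (\<lambda>t. dist (\<gamma> t) p0)"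
    by (intro continuous_intros sol_cont[OF sol])
  have "closed ({0..a} \<inter> (\<lambda>t. dist (\<gamma> t) p0) -` {\<rho>..})"
    by (rule continuous_closed_preimage[OF cd]) auto
  moreover have "{0..a} \<inter> (\<lambda>t. dist (\<gamma> t) p0) -` {\<rho>..} = S'" unfolding S'_def by auto
  ultimately have cl: "closed S'" by simp
  have bb: "bdd_below S'" unfolding S'_def by (rule bdd_belowI[of _ 0]) auto
  define t1 where "t1 = Inf S'"
  have t1S: "t1 \<in> S'" unfolding t1_def by (rule closed_contains_Inf[OF ne bb cl])
  then have t1a: "0 \<le> t1" "t1 \<le> a" and t1d: "\<rho> \<le> dist (\<gamma> t1) p0" unfolding S'_def by auto
  have below: "\<gamma> u \<in> N" if u: "u \<in> {0..<t1}" for u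
  proof -
    have "u \<notin> S'" using u cInf_lower[OF _ bb, of u] unfolding t1_def by force
    then show ?thesis using u t1a unfolding S'_def memN by auto
  qed
  have small: "dist (\<gamma> u) p0 \<le> s * K7" if u: "u \<in> {0..<t1}" for u
  proof -
    have "dist (\<gamma> u) (0, y0, 0, \<eta>0) \<le> s * K7"
    proof (rule apriori(2)[OF sol_restrict[OF sol] _ _ g0 s(1,2), of u u])
      show "u \<le> a" using u t1a by auto
      show "\<And>p. p \<in> N \<Longrightarrow> \<Phi> p = F p" by (rule \<Phi>F)
      show "\<And>t. t \<in> {0..u} \<Longrightarrow> \<gamma> t \<in> N" using below u by auto
    qed (use u t1a a in auto)
    then show ?thesis unfolding p0_def .
  qed
  have t1pos: "0 < t1"
  proof (rule ccontr)
    assume "\<not> 0 < t1"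
    then have "t1 = 0" using t1a by auto
    then show False using t1d d0 sK s by auto
  qed
  define Z where "Z = {0..t1} \<inter> (\<lambda>t. dist (\<gamma> t) p0) -` {..s * K7}"
  have "closed Z" unfolding Z_def
    by (rule continuous_closed_preimage[OF continuous_on_subset[OF cd]]) (use t1a in auto)
  moreover have "{0..<t1} \<subseteq> Z" unfolding Z_def using small by auto
  ultimately have "closure {0..<t1} \<subseteq> Z" by (rule closure_minimal[rotated])
  then have "t1 \<in> Z" using t1pos by auto
  then show False using t1d s unfolding Z_def by auto
qed

lemma sturm:
  fixes \<gamma> :: "real \<Rightarrow> 'm st"
  assumes sol: "\<forall>t\<in>{0..a}. (\<gamma> has_vector_derivative \<Phi> (\<gamma> t)) (at t within {0..a})"
    and \<Phi>F: "\<And>p. p \<in> N \<Longrightarrow> \<Phi> p = F p" and inN: "\<And>t. t \<in> {0..a} \<Longrightarrow> \<gamma> t \<in> N"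
    and a: "2 * pi \<le> a" and x0: "fst (\<gamma> 0) = 0" and pos: "\<And>t. t \<in> {0..2*pi} \<Longrightarrow> 0 \<le> fst (\<gamma> t)"
  shows "fst (\<gamma> (2 * pi)) \<le> 0"
proof -
  define b where "b = 2 * pi"
  have sol': "\<forall>t\<in>{0..b}. (\<gamma> has_vector_derivative \<Phi> (\<gamma> t)) (at t within {0..b})"
    using sol_restrict[OF sol] a unfolding b_def by auto
  have inN': "\<And>t. t \<in> {0..b} \<Longrightarrow> \<gamma> t \<in> N" using inN a unfolding b_def by auto
  define X where "X u = fst (\<gamma> u)" for u
  define \<Xi> where "\<Xi> u = fst (snd (snd (\<gamma> u)))" for u
  have d1: "(X has_real_derivative \<Xi> u) (at u within {0..b})" if "u \<in> {0..b}" for u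
    using sol_derivs(1)[OF sol' _ _ that, OF \<Phi>F inN'] unfolding X_def \<Xi>_def by simp
  have d3: "(\<Xi> has_real_derivative - X u * Q (\<gamma> u)) (at u within {0..b})" if "u \<in> {0..b}" for u
    using sol_derivs(3)[OF sol' _ _ that, OF \<Phi>F inN'] unfolding X_def \<Xi>_def by simp
  define W where "W u = \<Xi> u * sin (u / 2) - X u * cos (u / 2) / 2" for u
  have dW: "(W has_real_derivative X u * sin (u / 2) * (1/4 - Q (\<gamma> u))) (at u within {0..b})"
    if u: "u \<in> {0..b}" for u
    unfolding W_def
    by (rule derivative_eq_intros d1[OF u] d3[OF u] refl | simp add: field_simps)+
  have nW: "X u * sin (u / 2) * (1/4 - Q (\<gamma> u)) \<le> 0" if u: "u \<in> {0..b}" for u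
  proof -
    have "0 \<le> X u" using pos u unfolding X_def b_def by auto
    moreover have "0 \<le> sin (u / 2)" using u unfolding b_def by (intro sin_ge_zero) auto
    moreover have "1/4 - Q (\<gamma> u) \<le> 0" using bQ1[OF inN'[OF u]] by simp
    ultimately show ?thesis by (simp add: mult_nonneg_nonpos)
  qed
  have "W b \<le> W 0" by (rule decr_within[OF dW nW]) (auto simp: b_def)
  moreover have "W 0 = 0" unfolding W_def X_def using x0 by simp
  moreover have "W b = X b / 2" unfolding W_def b_def by simp
  ultimately show ?thesis unfolding X_def b_def by simp
qed

definition "t0 = 1 / (2 * C * E7 + 1)"

lemma t0_pos: "0 < t0" and t0_le: "t0 \<le> 1"
proof -
  have "0 \<le> 2 * C * E7" using C_ge E7_ge by simp
  then show "0 < t0" "t0 \<le> 1" unfolding t0_def by auto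
qed

lemma positivity:
  fixes \<gamma> :: "real \<Rightarrow> 'm st"
  assumes sol: "\<forall>t\<in>{0..a}. (\<gamma> has_vector_derivative \<Phi> (\<gamma> t)) (at t within {0..a})"
    and \<Phi>F: "\<And>p. p \<in> N \<Longrightarrow> \<Phi> p = F p" and inN: "\<And>t. t \<in> {0..a} \<Longrightarrow> \<gamma> t \<in> N"
    and g0: "\<gamma> 0 = (0, y0, s, \<eta>0)" and s: "0 < s" "s \<le> 1" and a: "t0 \<le> a" "a \<le> 8"
    and t: "0 < t" "t \<le> t0"
  shows "0 < fst (\<gamma> t)"
proof -
  have a0: "0 \<le> a" using a t0_pos by simp
  define X where "X u = fst (\<gamma> u)" for u
  define \<Xi> where "\<Xi> u = fst (snd (snd (\<gamma> u)))" for u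
  have d1: "(X has_real_derivative \<Xi> u) (at u within {0..a})" if "u \<in> {0..a}" for u
    using sol_derivs(1)[OF sol _ _ that, OF \<Phi>F inN] unfolding X_def \<Xi>_def by simp
  have d3: "(\<Xi> has_vector_derivative - X u * Q (\<gamma> u)) (at u within {0..a})" if "u \<in> {0..a}" for u
    using sol_derivs(3)[OF sol _ _ that, OF \<Phi>F inN] unfolding X_def \<Xi>_def
    by (simp add: has_real_derivative_iff_has_vector_derivative)
  have bX: "\<bar>X u\<bar> \<le> s * E7" if "u \<in> {0..a}" for u
    using apriori(1)[OF sol _ _ g0 _ s(2) a0 a(2) that, OF \<Phi>F inN] s unfolding X_def by simp
  have C0: "0 \<le> C" using C_ge by simp
  have xi: "s / 2 \<le> \<Xi> u" if u: "u \<in> {0..t0}" for u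
  proof -
    have "norm (\<Xi> u - \<Xi> 0) \<le> (s * E7 * C) * u"
    proof (rule vec_bound[OF d3])
      fix v assume v: "v \<in> {0..a}"
      have "\<bar>Q (\<gamma> v)\<bar> \<le> C" using bQ1[OF inN[OF v]] bQ2[OF inN[OF v]] by auto
      then show "norm (- X v * Q (\<gamma> v)) \<le> s * E7 * C"
        using bX[OF v] by (simp add: abs_mult mult_mono)
    qed (use u a in auto)
    moreover have "\<Xi> 0 = s" unfolding \<Xi>_def g0 by simp
    moreover have "(s * E7 * C) * u \<le> s / 2"
    proof -
      have "E7 * C * u \<le> E7 * C * t0" using u C0 E7_ge by (intro mult_left_mono) auto
      also have "\<dots> \<le> 1/2"
      proof -
        have "0 \<le> 2 * C * E7" using C0 E7_ge by simp
        then have pos: "0 < 2 * C * E7 + 1" by linarith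
        have "E7 * C * t0 = (E7 * C) / (2 * C * E7 + 1)" unfolding t0_def by simp
        also have "\<dots> \<le> 1/2" using pos by (subst divide_le_eq) (auto simp: algebra_simps)
        finally show ?thesis .
      qed
      finally show ?thesis using s by (simp add: mult.assoc mult_left_mono[of _ "1/2" s, simplified])
    qed
    ultimately show ?thesis by (simp add: abs_le_iff)
  qed
  have "(\<lambda>u. X u - s * u / 2) 0 \<le> (\<lambda>u. X u - s * u / 2) t"
  proof (rule incr_within[of t0 _ "\<lambda>u. \<Xi> u - s / 2"])
    fix u assume u: "u \<in> {0..t0}"
    then have "u \<in> {0..a}" using a by auto
    then have "(X has_real_derivative \<Xi> u) (at u within {0..t0})"
      by (rule DERIV_subset[OF d1]) (use a in auto)
    then show "((\<lambda>u. X u - s * u / 2) has_real_derivative \<Xi> u - s / 2) (at u within {0..t0})"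
      by (auto intro!: derivative_eq_intros)
    show "0 \<le> \<Xi> u - s / 2" using xi[OF u] by simp
  qed (use t in auto)
  then have "s * t / 2 \<le> X t" unfolding X_def using g0 by simp
  moreover have "0 < s * t / 2" using s t by simp
  ultimately show ?thesis unfolding X_def by simp
qed

end

lemma LB_lip: "LB C f \<Longrightarrow> \<exists>L\<ge>0. \<forall>p\<in>C. \<forall>q\<in>C. \<bar>f p - f q\<bar> \<le> L * dist p q"
  unfolding LB_def by blast

lemma LB_bound: "LB C f \<Longrightarrow> \<exists>B. \<forall>p\<in>C. \<bar>f p\<bar> \<le> B"
  unfolding LB_def by blast

lemma LB_vec:
  fixes v :: "'a::metric_space \<Rightarrow> real^'m::finite"
  assumes "\<And>i. LB C (\<lambda>p. v p $ i)"
  shows "\<exists>L\<ge>0. \<forall>p\<in>C. \<forall>q\<in>C. norm (v p - v q) \<le> L * dist p q"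
    and "\<exists>B. \<forall>p\<in>C. norm (v p) \<le> B"
proof -
  have "\<forall>i. \<exists>L. 0 \<le> L \<and> (\<forall>p\<in>C. \<forall>q\<in>C. \<bar>v p $ i - v q $ i\<bar> \<le> L * dist p q)"
    using assms LB_lip by blast
  from choice[OF this] obtain Lf where Lf: "\<forall>i. 0 \<le> Lf i \<and> (\<forall>p\<in>C. \<forall>q\<in>C. \<bar>v p $ i - v q $ i\<bar> \<le> Lf i * dist p q)"
    by blast
  have "norm (v p - v q) \<le> (\<Sum>i\<in>UNIV. Lf i) * dist p q" if "p \<in> C" "q \<in> C" for p q
  proof -
    have "norm (v p - v q) \<le> (\<Sum>i\<in>UNIV. \<bar>(v p - v q) $ i\<bar>)" by (rule norm_le_l1_cart)
    also have "\<dots> \<le> (\<Sum>i\<in>UNIV. Lf i * dist p q)"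
      by (rule sum_mono) (use Lf that in auto)
    also have "\<dots> = (\<Sum>i\<in>UNIV. Lf i) * dist p q" by (simp add: sum_distrib_right)
    finally show ?thesis .
  qed
  moreover have "0 \<le> (\<Sum>i\<in>UNIV. Lf i)" using Lf by (simp add: sum_nonneg)
  ultimately show "\<exists>L\<ge>0. \<forall>p\<in>C. \<forall>q\<in>C. norm (v p - v q) \<le> L * dist p q" by blast
  have "\<forall>i. \<exists>B. \<forall>p\<in>C. \<bar>v p $ i\<bar> \<le> B"
    using assms LB_bound by blast
  from choice[OF this] obtain Bf where Bf: "\<forall>i. \<forall>p\<in>C. \<bar>v p $ i\<bar> \<le> Bf i" by blast
  have "norm (v p) \<le> (\<Sum>i\<in>UNIV. Bf i)" if "p \<in> C" for p
  proof -
    have "norm (v p) \<le> (\<Sum>i\<in>UNIV. \<bar>v p $ i\<bar>)" by (rule norm_le_l1_cart)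
    also have "\<dots> \<le> (\<Sum>i\<in>UNIV. Bf i)"
      by (rule sum_mono) (use Bf that in auto)
    finally show ?thesis .
  qed
  then show "\<exists>B. \<forall>p\<in>C. norm (v p) \<le> B" by blast
qed

lemma LB_st:
  fixes F :: "'a::metric_space \<Rightarrow> 'm::finite st"
  assumes "LB C (\<lambda>p. fst (F p))" "\<And>i. LB C (\<lambda>p. fst (snd (F p)) $ i)"
    "LB C (\<lambda>p. fst (snd (snd (F p))))" "\<And>i. LB C (\<lambda>p. snd (snd (snd (F p))) $ i)"
  shows "\<exists>L\<ge>0. \<forall>p\<in>C. \<forall>q\<in>C. norm (F p - F q) \<le> L * dist p q"
proof -
  obtain L1 where L1: "0 \<le> L1" "\<forall>p\<in>C. \<forall>q\<in>C. \<bar>fst (F p) - fst (F q)\<bar> \<le> L1 * dist p q"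
    using LB_lip[OF assms(1)] by blast
  obtain L2 where L2: "0 \<le> L2" "\<forall>p\<in>C. \<forall>q\<in>C. norm (fst (snd (F p)) - fst (snd (F q))) \<le> L2 * dist p q"
    using LB_vec(1)[OF assms(2)] by blast
  obtain L3 where L3: "0 \<le> L3" "\<forall>p\<in>C. \<forall>q\<in>C. \<bar>fst (snd (snd (F p))) - fst (snd (snd (F q)))\<bar> \<le> L3 * dist p q"
    using LB_lip[OF assms(3)] by blast
  obtain L4 where L4: "0 \<le> L4" "\<forall>p\<in>C. \<forall>q\<in>C. norm (snd (snd (snd (F p))) - snd (snd (snd (F q)))) \<le> L4 * dist p q"
    using LB_vec(1)[OF assms(4)] by blast
  have "norm (F p - F q) \<le> (L1 + L2 + L3 + L4) * dist p q" if pq: "p \<in> C" "q \<in> C" for p q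
  proof -
    have eq: "F p - F q = (fst (F p) - fst (F q), fst (snd (F p)) - fst (snd (F q)),
        fst (snd (snd (F p))) - fst (snd (snd (F q))), snd (snd (snd (F p))) - snd (snd (snd (F q))))"
      by (simp add: prod_eq_iff)
    have "norm (F p - F q) \<le> norm (fst (F p) - fst (F q)) + norm (fst (snd (F p)) - fst (snd (F q)))
        + norm (fst (snd (snd (F p))) - fst (snd (snd (F q)))) + norm (snd (snd (snd (F p))) - snd (snd (snd (F q))))"
      unfolding eq by (rule norm4)
    also have "\<dots> \<le> L1 * dist p q + L2 * dist p q + L3 * dist p q + L4 * dist p q"
      using L1 L2 L3 L4 pq unfolding real_norm_def by (intro add_mono) auto
    also have "\<dots> = (L1 + L2 + L3 + L4) * dist p q" by (simp add: algebra_simps)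
    finally show ?thesis .
  qed
  moreover have "0 \<le> L1 + L2 + L3 + L4" using L1 L2 L3 L4 by simp
  ultimately show ?thesis by blast
qed

lemma LB_coord:
  fixes C :: "'m::finite st set"
  assumes "bounded C" and lip: "\<And>p q. \<bar>f p - f q\<bar> \<le> dist p q" and nb: "\<And>p. \<bar>f p\<bar> \<le> norm p"
  shows "LB C f"
proof -
  obtain B where B: "\<forall>p\<in>C. norm p \<le> B" using assms(1) unfolding bounded_iff by blast
  show ?thesis
  proof (rule LBI[of 1 "\<bar>B\<bar>"])
    fix p assume "p \<in> C" then show "\<bar>f p\<bar> \<le> \<bar>B\<bar>" using B nb[of p] by force
  qed (use lip in auto)
qed

lemma coords:
  fixes p q :: "'m::finite st"
  shows "\<bar>fst p - fst q\<bar> \<le> dist p q" "\<bar>fst p\<bar> \<le> norm p"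
    "\<bar>fst (snd (snd p)) - fst (snd (snd q))\<bar> \<le> dist p q" "\<bar>fst (snd (snd p))\<bar> \<le> norm p"
    "\<bar>snd (snd (snd p)) $ i - snd (snd (snd q)) $ i\<bar> \<le> dist p q" "\<bar>snd (snd (snd p)) $ i\<bar> \<le> norm p"
proof -
  show "\<bar>fst p - fst q\<bar> \<le> dist p q" using dist_fst_le[of p q] by (simp add: dist_real_def)
  show "\<bar>fst p\<bar> \<le> norm p" using norm_fst_le[of "fst p" "snd p"] unfolding prod.collapse by simp
  have d1: "dist (snd (snd p)) (snd (snd q)) \<le> dist p q"
    using dist_snd_le[of "snd p" "snd q"] dist_snd_le[of p q] by linarith
  have n0: "norm (snd (snd p)) \<le> norm (snd p)"
    using norm_snd_le[of "snd (snd p)" "fst (snd p)"] unfolding prod.collapse .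
  have n00: "norm (snd p) \<le> norm p"
    using norm_snd_le[of "snd p" "fst p"] unfolding prod.collapse .
  have n1: "norm (snd (snd p)) \<le> norm p" using n0 n00 by linarith
  show "\<bar>fst (snd (snd p)) - fst (snd (snd q))\<bar> \<le> dist p q"
    using dist_fst_le[of "snd (snd p)" "snd (snd q)"] d1 by (simp add: dist_real_def)
  show "\<bar>fst (snd (snd p))\<bar> \<le> norm p"
    using norm_fst_le[of "fst (snd (snd p))" "snd (snd (snd p))"] n1 unfolding prod.collapse real_norm_def by linarith
  have "\<bar>snd (snd (snd p)) $ i - snd (snd (snd q)) $ i\<bar> \<le> norm (snd (snd (snd p)) - snd (snd (snd q)))"
    using component_le_norm_cart[of "snd (snd (snd p)) - snd (snd (snd q))" i] by simp
  also have "\<dots> \<le> dist p q"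
    using dist_snd_le[of "snd (snd p)" "snd (snd q)"] d1 by (simp add: dist_norm)
  finally show "\<bar>snd (snd (snd p)) $ i - snd (snd (snd q)) $ i\<bar> \<le> dist p q" .
  have "\<bar>snd (snd (snd p)) $ i\<bar> \<le> norm (snd (snd (snd p)))" by (rule component_le_norm_cart)
  also have "\<dots> \<le> norm p"
    using norm_snd_le[of "snd (snd (snd p))" "fst (snd (snd p))"] n1 unfolding prod.collapse by linarith
  finally show "\<bar>snd (snd (snd p)) $ i\<bar> \<le> norm p" .
qed

lemma pidist:
  fixes p q :: "'m::finite st"
  shows "dist (fst p, fst (snd p)) (fst q, fst (snd q)) \<le> dist p q"
proof -
  have e1: "dist p q = sqrt ((dist (fst p) (fst q))\<^sup>2 + (dist (snd p) (snd q))\<^sup>2)"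
    using dist_Pair_Pair[of "fst p" "snd p" "fst q" "snd q"] by simp
  have e2: "dist (fst p, fst (snd p)) (fst q, fst (snd q)) = sqrt ((dist (fst p) (fst q))\<^sup>2 + (dist (fst (snd p)) (fst (snd q)))\<^sup>2)"
    by (rule dist_Pair_Pair)
  have "dist (fst (snd p)) (fst (snd q)) \<le> dist (snd p) (snd q)" by (rule dist_fst_le)
  then have "(dist (fst (snd p)) (fst (snd q)))\<^sup>2 \<le> (dist (snd p) (snd q))\<^sup>2"
    by (simp add: power_mono)
  then show ?thesis unfolding e1 e2 by simp
qed

theorem proposition5p1:
  fixes hinv :: "real \<Rightarrow> real^'m \<Rightarrow> real^'m^'m"
    and U :: "(real \<times> (real^'m)) set"
    and y0 :: "real^'m" and \<eta>0 :: "real^'m"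
  assumes U_open: "open U" and y0_in: "(0, y0) \<in> U"
    and h_smooth: "\<forall>i j. smooth_on (\<lambda>(x, y). hinv x y $ i $ j) U"
    and h_sym: "\<forall>(x, y)\<in>U. \<forall>i j. hinv x y $ i $ j = hinv x y $ j $ i"
    and h_pos: "\<forall>(x, y)\<in>U. \<forall>v. v \<noteq> 0 \<longrightarrow> hquad hinv x y v > 0"
    and eta_unit: "hquad hinv 0 y0 \<eta>0 = 1"
  shows "\<forall>e>0. \<exists>\<delta>>0. \<forall>s. 0 < s \<and> s < \<delta> \<longrightarrow>
           (\<exists>\<gamma> T. exit_trajectory hinv U y0 s \<eta>0 \<gamma> T) \<and>
           (\<forall>\<gamma> T. exit_trajectory hinv U y0 s \<eta>0 \<gamma> T \<longrightarrow>
              (\<forall>t\<in>{0..T}. dist (\<gamma> t) (0, y0, 0, \<eta>0) < e) \<and> s * T < e)"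
proof -
  obtain r where r: "0 < r" "cball (0, y0) r \<subseteq> U"
    using U_open y0_in open_contains_cball by blast
  define K where "K = cball ((0::real), y0) r"
  define p0 :: "'m st" where "p0 = (0, y0, 0, \<eta>0)"
  define N0 where "N0 = cball p0 r"
  have KU: "K \<subseteq> U" using r K_def by simp
  have cK: "compact K" "convex K" unfolding K_def by auto
  have bN0: "bounded N0" unfolding N0_def by simp
  have piK: "(fst p, fst (snd p)) \<in> K" if "p \<in> N0" for p
  proof -
    have "dist (0, y0) (fst p, fst (snd p)) \<le> dist p0 p"
      using pidist[of p0 p] unfolding p0_def by simp
    then show ?thesis using that unfolding K_def N0_def by simp
  qed
  have LBK: "LB N0 (\<lambda>p. g (fst p, fst (snd p)))" if "LB K g" for g
    by (rule LB_comp[OF that, of N0 "\<lambda>p. (fst p, fst (snd p))"]) (auto intro: piK pidist)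
  have sm: "Ck_on k (\<lambda>(x, y). hinv x y $ i $ j) U" for k i j
    using h_smooth unfolding smooth_on_def by blast
  have LBh: "LB N0 (\<lambda>p. hinv (fst p) (fst (snd p)) $ i $ j)" for i j
    using LBK[OF LB_C1[OF sm[of "Suc 0" i j] KU cK]] by simp
  have Bx: "((1::real), (0::real^'m)) \<in> Basis" by (simp add: Basis_prod_def)
  have By: "((0::real), axis k (1::real)) \<in> (Basis :: (real \<times> (real^'m)) set)" for k
    by (simp add: Basis_prod_def axis_in_Basis_iff)
  have LBdx: "LB N0 (\<lambda>p. dx_hinv hinv (fst p) (fst (snd p)) i j)" for i j
  proof -
    have "Ck_on (Suc 0) (\<lambda>q. frechet_derivative (\<lambda>(x, y). hinv x y $ i $ j) (at q) (1, 0)) U"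
      using sm[of "Suc (Suc 0)" i j, unfolded Ck_on.simps(2)[of "Suc 0"]] Bx by blast
    from LBK[OF LB_C1[OF this KU cK]] show ?thesis unfolding dx_hinv_def by simp
  qed
  have LBdy: "LB N0 (\<lambda>p. dy_hinv hinv (fst p) (fst (snd p)) k i j)" for k i j
  proof -
    have "Ck_on (Suc 0) (\<lambda>q. frechet_derivative (\<lambda>(x, y). hinv x y $ i $ j) (at q) (0, axis k 1)) U"
      using sm[of "Suc (Suc 0)" i j, unfolded Ck_on.simps(2)[of "Suc 0"]] By[of k] by blast
    from LBK[OF LB_C1[OF this KU cK]] show ?thesis unfolding dy_hinv_def by simp
  qed
  have LBx: "LB N0 (\<lambda>p. fst p)" by (rule LB_coord[OF bN0]) (rule coords)+
  have LBxi: "LB N0 (\<lambda>p. fst (snd (snd p)))" by (rule LB_coord[OF bN0]) (rule coords)+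
  have LBeta: "LB N0 (\<lambda>p. snd (snd (snd p)) $ i)" for i by (rule LB_coord[OF bN0]) (rule coords)+
  define A :: "'m st \<Rightarrow> real^'m" where
    "A p = (\<chi> i. \<Sum>j\<in>UNIV. hinv (fst p) (fst (snd p)) $ i $ j * snd (snd (snd p)) $ j)" for p
  define Bv :: "'m st \<Rightarrow> real^'m" where
    "Bv p = (\<chi> i. - (1/2 * (\<Sum>k\<in>UNIV. \<Sum>j\<in>UNIV. dy_hinv hinv (fst p) (fst (snd p)) i k j * snd (snd (snd p)) $ k * snd (snd (snd p)) $ j)))" for p
  define Q :: "'m st \<Rightarrow> real" where
    "Q p = hquad hinv (fst p) (fst (snd p)) (snd (snd (snd p))) + fst p / 2 *
       (\<Sum>i\<in>UNIV. \<Sum>j\<in>UNIV. dx_hinv hinv (fst p) (fst (snd p)) i j * snd (snd (snd p)) $ i * snd (snd (snd p)) $ j)" for p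
  define F where "F = ham_field hinv"
  have F1: "fst (F p) = fst (snd (snd p))" for p
    unfolding F_def ham_field_def by (simp add: Let_def)
  have F2: "fst (snd (F p)) = (fst p)^2 *\<^sub>R A p" for p
    unfolding F_def ham_field_def A_def by (simp add: Let_def vec_eq_iff)
  have F3: "fst (snd (snd (F p))) = - fst p * Q p" for p
    unfolding F_def ham_field_def Q_def by (simp add: Let_def algebra_simps power2_eq_square)
  have F4: "snd (snd (snd (F p))) = (fst p)^2 *\<^sub>R Bv p" for p
    unfolding F_def ham_field_def Bv_def by (simp add: Let_def vec_eq_iff algebra_simps)
  have LBA: "LB N0 (\<lambda>p. A p $ i)" for i
    unfolding A_def by (simp, intro LB_sum LB_mult LBh LBeta)
  have LBB: "LB N0 (\<lambda>p. Bv p $ i)" for i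
    unfolding Bv_def by (simp, intro LB_minus LB_divide LB_mult LB_sum LB_const LBdy LBeta)
  have LBQ: "LB N0 Q"
    unfolding Q_def hquad_def by (intro LB_add LB_mult LB_sum LB_divide LBh LBdx LBeta LBx)
  have LF1: "LB N0 (\<lambda>p. fst (F p))" unfolding F1 by (rule LBxi)
  have LF2: "LB N0 (\<lambda>p. fst (snd (F p)) $ i)" for i unfolding F2 by (simp, intro LB_mult LB_power LBx LBA)
  have LF3: "LB N0 (\<lambda>p. fst (snd (snd (F p))))" unfolding F3 by (intro LB_mult LB_minus LBx LBQ)
  have LF4: "LB N0 (\<lambda>p. snd (snd (snd (F p))) $ i)" for i unfolding F4 by (simp, intro LB_mult LB_power LBx LBB)
  obtain LF where LF: "0 \<le> LF" "\<And>p q. p \<in> N0 \<Longrightarrow> q \<in> N0 \<Longrightarrow> norm (F p - F q) \<le> LF * dist p q"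
    using LB_st[OF LF1 LF2 LF3 LF4] by blast
  obtain LQ where LQ: "0 \<le> LQ" "\<And>p q. p \<in> N0 \<Longrightarrow> q \<in> N0 \<Longrightarrow> \<bar>Q p - Q q\<bar> \<le> LQ * dist p q"
    using LB_lip[OF LBQ] by blast
  obtain CQ where CQ: "\<And>p. p \<in> N0 \<Longrightarrow> \<bar>Q p\<bar> \<le> CQ" using LB_bound[OF LBQ] by blast
  obtain CA where CA: "\<And>p. p \<in> N0 \<Longrightarrow> norm (A p) \<le> CA" using LB_vec(2)[OF LBA] by blast
  obtain CB where CB: "\<And>p. p \<in> N0 \<Longrightarrow> norm (Bv p) \<le> CB" using LB_vec(2)[OF LBB] by blast
  define C where "C = max (max CQ CA) (max CB 1)"
  define \<rho> where "\<rho> = min r (3 / (4 * (LQ + 1)))"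
  define N where "N = cball p0 \<rho>"
  have \<rho>pos: "0 < \<rho>" unfolding \<rho>_def using r LQ by simp
  have NN0: "N \<subseteq> N0" unfolding N_def N0_def \<rho>_def by auto
  have Qp0: "Q p0 = 1" unfolding Q_def p0_def using eta_unit by simp
  have p0N0: "p0 \<in> N0" unfolding N0_def using r by simp
  have Qlow: "1/4 \<le> Q p" if p: "p \<in> N" for p
  proof -
    have "\<bar>Q p - Q p0\<bar> \<le> LQ * dist p p0" using LQ(2)[of p p0] p NN0 p0N0 by auto
    also have "\<dots> \<le> LQ * \<rho>" using p LQ(1) unfolding N_def by (intro mult_left_mono) (auto simp: dist_commute)
    also have "\<dots> \<le> LQ * (3 / (4 * (LQ + 1)))" unfolding \<rho>_def using LQ(1) by (intro mult_left_mono) auto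
    also have "\<dots> \<le> 3/4" using LQ(1) by (simp add: field_simps)
    finally have "\<bar>Q p - 1\<bar> \<le> 3/4" using Qp0 by simp
    then show ?thesis unfolding abs_le_iff by linarith
  qed
  interpret S: sys F A Bv Q C \<rho> y0 \<eta>0 N
  proof
    show "\<And>p. fst (F p) = fst (snd (snd p))" by (rule F1)
    show "\<And>p. fst (snd (F p)) = (fst p)\<^sup>2 *\<^sub>R A p" by (rule F2)
    show "\<And>p. fst (snd (snd (F p))) = - fst p * Q p" by (rule F3)
    show "\<And>p. snd (snd (snd (F p))) = (fst p)\<^sup>2 *\<^sub>R Bv p" by (rule F4)
    show "N = cball (0, y0, 0, \<eta>0) \<rho>" unfolding N_def p0_def ..
    show "\<And>p. p \<in> N \<Longrightarrow> norm (A p) \<le> C" using CA NN0 unfolding C_def by fastforce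
    show "\<And>p. p \<in> N \<Longrightarrow> norm (Bv p) \<le> C" using CB NN0 unfolding C_def by fastforce
    show "\<And>p. p \<in> N \<Longrightarrow> 1 / 4 \<le> Q p" by (rule Qlow)
    show "\<And>p. p \<in> N \<Longrightarrow> Q p \<le> C" using CQ NN0 unfolding C_def by (fastforce simp: abs_le_iff)
    show "0 < \<rho>" by (rule \<rho>pos)
  qed
  have NU: "(fst p, fst (snd p)) \<in> U" if "p \<in> N" for p using piK[of p] NN0 KU that by auto
  have pi4: "2 * pi < 8" using pi_less_4 by simp
  have pi0: "0 < 2 * pi" by simp
  define G where "G p = F (closest_point N p)" for p
  have cN: "convex N" "closed N" "N \<noteq> {}" unfolding N_def using \<rho>pos by auto
  have Glip: "norm (G p - G q) \<le> LF * norm (p - q)" for p q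
  proof -
    have "closest_point N p \<in> N0" "closest_point N q \<in> N0"
      using closest_point_in_set[OF cN(2,3), of p] closest_point_in_set[OF cN(2,3), of q] NN0 by blast+
    then have "norm (G p - G q) \<le> LF * dist (closest_point N p) (closest_point N q)"
      unfolding G_def by (rule LF(2))
    also have "\<dots> \<le> LF * dist p q"
      by (rule mult_left_mono[OF closest_point_lipschitz[OF cN] LF(1)])
    finally show ?thesis by (simp add: dist_norm)
  qed
  have GF: "\<And>p. p \<in> N \<Longrightarrow> G p = F p" unfolding G_def by (simp add: closest_point_self)
  have FF: "\<And>p. p \<in> N \<Longrightarrow> F p = F p" by simp
  show ?thesis
  proof (intro allI impI)
    fix e :: real assume e: "0 < e"
    define \<delta> where "\<delta> = min (min 1 (\<rho> / (S.K7 + 1))) (e / (S.K7 + 8))"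
    have K2: "2 \<le> S.K7" by (rule S.K7_ge)
    have \<delta>pos: "0 < \<delta>" unfolding \<delta>_def using \<rho>pos e K2 by simp
    show "\<exists>\<delta>>0. \<forall>s. 0 < s \<and> s < \<delta> \<longrightarrow>
           (\<exists>\<gamma> T. exit_trajectory hinv U y0 s \<eta>0 \<gamma> T) \<and>
           (\<forall>\<gamma> T. exit_trajectory hinv U y0 s \<eta>0 \<gamma> T \<longrightarrow>
              (\<forall>t\<in>{0..T}. dist (\<gamma> t) (0, y0, 0, \<eta>0) < e) \<and> s * T < e)"
    proof (rule exI[of _ \<delta>], rule conjI[OF \<delta>pos], intro allI impI)
      fix s :: real assume s: "0 < s \<and> s < \<delta>"
      have s0: "0 < s" using s by simp
      have s1: "s \<le> 1" using s unfolding \<delta>_def by simp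
      have "s < \<rho> / (S.K7 + 1)" using s unfolding \<delta>_def by simp
      then have "s * (S.K7 + 1) < \<rho>" using K2 by (simp add: field_simps)
      then have sK: "s * S.K7 < \<rho>" using s0 by (simp add: algebra_simps)
      have "s < e / (S.K7 + 8)" using s unfolding \<delta>_def by simp
      then have se0: "s * (S.K7 + 8) < e" using K2 by (simp add: field_simps)
      have sK0: "0 \<le> s * S.K7" using s0 K2 by simp
      have se: "s * S.K7 < e" and s8: "s * 8 < e" using se0 s0 sK0 by (simp_all add: algebra_simps)
      have s0': "0 \<le> s" using s0 by simp
      have a08: "(0::real) \<le> 8" by simp
      have EX: "\<exists>\<gamma> T. exit_trajectory hinv U y0 s \<eta>0 \<gamma> T"
      proof -
        obtain \<gamma> where g0: "\<gamma> 0 = (0, y0, s, \<eta>0)"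
          and solG: "\<forall>t\<in>{0..8}. (\<gamma> has_vector_derivative G (\<gamma> t)) (at t within {0..8})"
          using picard[of G LF 8 "(0, y0, s, \<eta>0)"] Glip LF(1) by auto
        have in8: "\<forall>t\<in>{0..8}. \<gamma> t \<in> N"
          by (rule S.bootstrap[OF solG _ g0 s0' s1 sK a08 order_refl, OF GF])
        have inN: "\<And>t. t \<in> {0..8} \<Longrightarrow> \<gamma> t \<in> N" using in8 by blast
        have solF: "\<forall>t\<in>{0..8}. (\<gamma> has_vector_derivative F (\<gamma> t)) (at t within {0..8})"
        proof
          fix t :: real assume t: "t \<in> {0..8}"
          show "(\<gamma> has_vector_derivative F (\<gamma> t)) (at t within {0..8})"
            using bspec[OF solG t] GF[OF inN[OF t]] by simp
        qed
        have cx: "continuous_on {0..8} (\<lambda>t. fst (\<gamma> t))"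
          using sol_cont[OF solF] by (intro continuous_intros)
        have t0: "0 < S.t0" "S.t0 \<le> 1" by (rule S.t0_pos, rule S.t0_le)
        have t08: "S.t0 \<le> 8" using t0 by simp
        have posit: "0 < fst (\<gamma> t)" if "0 < t" "t \<le> S.t0" for t
          by (rule S.positivity[OF solF _ _ g0 s0 s1 t08 order_refl that, OF FF inN])
        define Zs where "Zs = {t\<in>{S.t0..8}. fst (\<gamma> t) \<le> 0}"
        have Zne: "Zs \<noteq> {}"
        proof
          assume Z0: "Zs = {}"
          have pos2: "0 \<le> fst (\<gamma> t)" if t: "t \<in> {0..2*pi}" for t
          proof (cases "t = 0")
            case True then show ?thesis using g0 by simp
          next
            case False
            show ?thesis
            proof (cases "t \<le> S.t0")
              case True then show ?thesis using posit[of t] False t by force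
            next
              case False
              then have "t \<notin> Zs" using Z0 by simp
              with t False pi4 show ?thesis unfolding Zs_def by auto
            qed
          qed
          have "fst (\<gamma> (2*pi)) \<le> 0"
            by (rule S.sturm[OF solF _ _ _ _ pos2, OF FF inN]) (use pi4 g0 in auto)
          moreover have "2 * pi \<notin> Zs" using Z0 by simp
          moreover have "2 * pi \<in> {S.t0..8}" using t0 pi4 pi_ge_two by auto
          ultimately show False unfolding Zs_def by auto
        qed
        have "closed ({S.t0..8} \<inter> (\<lambda>t. fst (\<gamma> t)) -` {..0})"
          by (rule continuous_closed_preimage[OF continuous_on_subset[OF cx]]) (use t0 in auto)
        moreover have "{S.t0..8} \<inter> (\<lambda>t. fst (\<gamma> t)) -` {..0} = Zs" unfolding Zs_def by auto
        ultimately have Zcl: "closed Zs" by simp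
        have Zbb: "bdd_below Zs" unfolding Zs_def by (rule bdd_belowI[of _ "S.t0"]) auto
        define T where "T = Inf Zs"
        have TZ: "T \<in> Zs" unfolding T_def by (rule closed_contains_Inf[OF Zne Zbb Zcl])
        then have T1: "S.t0 \<le> T" "T \<le> 8" "fst (\<gamma> T) \<le> 0" unfolding Zs_def by auto
        have Tgt: "S.t0 < T"
        proof (rule ccontr)
          assume "\<not> S.t0 < T"
          then have "T = S.t0" using T1 by simp
          then show False using posit[of S.t0] t0 T1 by simp
        qed
        have xpos: "0 < fst (\<gamma> t)" if t: "0 < t" "t < T" for t
        proof (cases "t \<le> S.t0")
          case True then show ?thesis using posit t by simp
        next
          case False
          have "t \<notin> Zs"
          proof
            assume "t \<in> Zs"
            then have "T \<le> t" unfolding T_def by (rule cInf_lower[OF _ Zbb])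
            then show False using t by simp
          qed
          then show ?thesis using False t T1 unfolding Zs_def by auto
        qed
        have "closed ({S.t0..T} \<inter> (\<lambda>t. fst (\<gamma> t)) -` {0..})"
          by (rule continuous_closed_preimage[OF continuous_on_subset[OF cx]]) (use t0 T1 in auto)
        moreover have "{S.t0..<T} \<subseteq> {S.t0..T} \<inter> (\<lambda>t. fst (\<gamma> t)) -` {0..}"
        proof
          fix x assume x: "x \<in> {S.t0..<T}"
          then have "0 < fst (\<gamma> x)" using xpos[of x] t0 by auto
          then show "x \<in> {S.t0..T} \<inter> (\<lambda>t. fst (\<gamma> t)) -` {0..}" using x by auto
        qed
        ultimately have "closure {S.t0..<T} \<subseteq> {S.t0..T} \<inter> (\<lambda>t. fst (\<gamma> t)) -` {0..}"
          by (rule closure_minimal[rotated])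
        moreover have "T \<in> closure {S.t0..<T}" using Tgt by simp
        ultimately have "T \<in> {S.t0..T} \<inter> (\<lambda>t. fst (\<gamma> t)) -` {0..}" by blast
        then have xT: "fst (\<gamma> T) = 0" using T1 by auto
        have U1: "\<forall>t\<in>{0..T}. (fst (\<gamma> t), fst (snd (\<gamma> t))) \<in> U \<and>
            (\<gamma> has_vector_derivative ham_field hinv (\<gamma> t)) (at t within {0..T})"
        proof
          fix t assume t: "t \<in> {0..T}"
          then have t8: "t \<in> {0..8}" using T1 by auto
          have "(\<gamma> has_vector_derivative F (\<gamma> t)) (at t within {0..T})"
            by (rule has_vector_derivative_within_subset[OF bspec[OF solF t8]]) (use T1 in auto)
          then show "(fst (\<gamma> t), fst (snd (\<gamma> t))) \<in> U \<and>
            (\<gamma> has_vector_derivative ham_field hinv (\<gamma> t)) (at t within {0..T})"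
            using NU[OF inN[OF t8]] unfolding F_def by simp
        qed
        have U2: "\<forall>t\<in>{0<..<T}. 0 < fst (\<gamma> t)" using xpos by auto
        have "0 < T" using Tgt t0 by simp
        then have "exit_trajectory hinv U y0 s \<eta>0 \<gamma> T"
          unfolding exit_trajectory_def using g0 U1 U2 xT by blast
        then show ?thesis by blast
      qed
      have ALL: "\<forall>\<gamma> T. exit_trajectory hinv U y0 s \<eta>0 \<gamma> T \<longrightarrow>
              (\<forall>t\<in>{0..T}. dist (\<gamma> t) (0, y0, 0, \<eta>0) < e) \<and> s * T < e"
      proof (intro allI impI)
        fix \<gamma> T assume ex: "exit_trajectory hinv U y0 s \<eta>0 \<gamma> T"
        have T0: "0 < T" and g0: "\<gamma> 0 = (0, y0, s, \<eta>0)"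
          and solT: "\<forall>t\<in>{0..T}. (\<gamma> has_vector_derivative F (\<gamma> t)) (at t within {0..T})"
          and xpos: "\<forall>t\<in>{0<..<T}. 0 < fst (\<gamma> t)" and xT: "fst (\<gamma> T) = 0"
          using ex unfolding exit_trajectory_def F_def by auto
        have T0': "0 \<le> T" using T0 by simp
        have x00: "fst (\<gamma> 0) = 0" using g0 by simp
        define a' where "a' = min T 8"
        have solA: "\<forall>t\<in>{0..a'}. (\<gamma> has_vector_derivative F (\<gamma> t)) (at t within {0..a'})"
          by (rule sol_restrict[OF solT]) (simp add: a'_def)
        have inN': "\<forall>t\<in>{0..a'}. \<gamma> t \<in> N"
          by (rule S.bootstrap[OF solA _ g0 s0' s1 sK, OF FF]) (auto simp: a'_def T0')
        have T2: "T \<le> 2 * pi"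
        proof (rule ccontr)
          assume "\<not> T \<le> 2 * pi"
          then have T2': "2 * pi < T" by simp
          have sol2: "\<forall>t\<in>{0..2*pi}. (\<gamma> has_vector_derivative F (\<gamma> t)) (at t within {0..2*pi})"
            by (rule sol_restrict[OF solT]) (use T2' in simp)
          have in2: "\<gamma> t \<in> N" if "t \<in> {0..2*pi}" for t
            using inN' T2' pi4 that unfolding a'_def by auto
          have pos2: "0 \<le> fst (\<gamma> t)" if t: "t \<in> {0..2*pi}" for t
          proof (cases "t = 0")
            case True then show ?thesis using g0 by simp
          next
            case False then show ?thesis using xpos t T2' by (auto intro: less_imp_le)
          qed
          have "fst (\<gamma> (2*pi)) \<le> 0"
            by (rule S.sturm[OF sol2 _ _ order_refl x00 pos2, OF FF in2])
          moreover have "0 < fst (\<gamma> (2*pi))" using xpos T2' pi0 by auto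
          ultimately show False by simp
        qed
        then have aT: "a' = T" using pi4 unfolding a'_def by simp
        have inN: "\<gamma> t \<in> N" if "t \<in> {0..T}" for t using inN' aT that by auto
        have T8: "T \<le> 8" using T2 pi4 by simp
        have dst: "\<forall>t\<in>{0..T}. dist (\<gamma> t) (0, y0, 0, \<eta>0) < e"
        proof
          fix t assume t: "t \<in> {0..T}"
          have "dist (\<gamma> t) (0, y0, 0, \<eta>0) \<le> s * S.K7"
            by (rule S.apriori(2)[OF solT _ _ g0 s0' s1 T0' T8 t, OF FF inN])
          then show "dist (\<gamma> t) (0, y0, 0, \<eta>0) < e" using se by simp
        qed
        have "s * T \<le> s * 8" using T8 s0 by simp
        then show "(\<forall>t\<in>{0..T}. dist (\<gamma> t) (0, y0, 0, \<eta>0) < e) \<and> s * T < e" using dst s8 by simp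
      qed
      show "(\<exists>\<gamma> T. exit_trajectory hinv U y0 s \<eta>0 \<gamma> T) \<and>
           (\<forall>\<gamma> T. exit_trajectory hinv U y0 s \<eta>0 \<gamma> T \<longrightarrow>
              (\<forall>t\<in>{0..T}. dist (\<gamma> t) (0, y0, 0, \<eta>0) < e) \<and> s * T < e)"
        using EX ALL by blast
    qed
  qed
qed

end
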